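(* (1) Every nonempty compact metric space $X$ admits a peripheral extension. (2) Any two peripheral extensions of a nonempty compact metric space $X$ are homeomorphic via a homeomorphism that is the identity on $X$. (3) Given a peripheral extension $K$ of $X$, the group of homeomorphisms of $K$ that are the identity on $X$ acts transitively on the set $P$ of peripheral points of $K$.
   Context: Let $P$ be a countably infinite discrete space. A peripheral extension of a compact metric space $X$ is a compact metric space $K$ containing $P$ as an open dense subspace such that $K\setminus P$ is homeomorphic to $X$ (identified with $X$); the points of $P$ are the peripheral points. *)

theory Defs
  imports "HOL-Analysis.Analysis"
begin

definition peripheral_extension ::
  "'a topology \<Rightarrow> 'b topology \<Rightarrow> 'b set \<Rightarrow> ('a \<Rightarrow> 'b) \<Rightarrow> bool" where
  "peripheral_extension X K P e \<longleftrightarrow>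
     metrizable_space K \<and> compact_space K \<and>
     P \<subseteq> topspace K \<and> countable P \<and> infinite P \<and>
     subtopology K P = discrete_topology P \<and>
     openin K P \<and> K closure_of P = topspace K \<and>
     homeomorphic_map X (subtopology K (topspace K - P)) e"

end

theory Submission
  imports Defs
begin


definition pbij_ok :: "('p \<Rightarrow> 'q \<Rightarrow> bool) \<Rightarrow> 'p set \<Rightarrow> 'q set \<Rightarrow> ('p \<times> 'q) set \<Rightarrow> bool" where
  "pbij_ok good A B R \<longleftrightarrow> finite R \<and> R \<subseteq> A \<times> B \<and> (\<forall>(p,q)\<in>R. good p q) \<and>
     (\<forall>(p,q)\<in>R. \<forall>(p',q')\<in>R. (p = p') = (q = q'))"

lemma pbij_ext_dom:
  assumes ok: "pbij_ok good A B R" and p: "p \<in> A"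
    and H: "\<And>p F. p \<in> A \<Longrightarrow> finite F \<Longrightarrow> \<exists>q\<in>B-F. good p q"
  shows "\<exists>R'. pbij_ok good A B R' \<and> R \<subseteq> R' \<and> p \<in> Domain R'"
proof (cases "p \<in> Domain R")
  case True then show ?thesis using ok by blast
next
  case False
  have "finite (Range R)" using ok unfolding pbij_ok_def by (simp add: finite_Range)
  then obtain q where q: "q \<in> B" "q \<notin> Range R" "good p q" using H[OF p] by blast
  have "pbij_ok good A B (insert (p,q) R)"
    using ok q p False unfolding pbij_ok_def by (auto simp: Domain.simps Range.simps)
  then show ?thesis by blast
qed

lemma pbij_ok_converse:
  "pbij_ok good A B R \<Longrightarrow> pbij_ok (\<lambda>q p. good p q) B A (R\<inverse>)"
  unfolding pbij_ok_def by auto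

lemma pbij_ext_both:
  assumes ok: "pbij_ok good A B R" and p: "p \<in> A" and q: "q \<in> B"
    and H1: "\<And>p F. p \<in> A \<Longrightarrow> finite F \<Longrightarrow> \<exists>q\<in>B-F. good p q"
    and H2: "\<And>q F. q \<in> B \<Longrightarrow> finite F \<Longrightarrow> \<exists>p\<in>A-F. good p q"
  shows "\<exists>R'. pbij_ok good A B R' \<and> R \<subseteq> R' \<and> p \<in> Domain R' \<and> q \<in> Range R'"
proof -
  obtain R1 where R1: "pbij_ok good A B R1" "R \<subseteq> R1" "p \<in> Domain R1"
    using pbij_ext_dom[OF ok p H1] by blast
  obtain R2 where R2: "pbij_ok (\<lambda>q p. good p q) B A R2" "R1\<inverse> \<subseteq> R2" "q \<in> Domain R2"
    using pbij_ext_dom[OF pbij_ok_converse[OF R1(1)] q] H2 by blast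
  have "pbij_ok good A B (R2\<inverse>)"
    using pbij_ok_converse[OF R2(1)] by simp
  moreover have "R \<subseteq> R2\<inverse>" using R1(2) R2(2) by auto
  moreover have "p \<in> Domain (R2\<inverse>)" using R1(3) R2(2) by auto
  moreover have "q \<in> Range (R2\<inverse>)" using R2(3) by auto
  ultimately show ?thesis by blast
qed

lemma back_forth:
  assumes cA: "countable A" and cB: "countable B" and nA: "A \<noteq> {}" and nB: "B \<noteq> {}"
    and H1: "\<And>p F. p \<in> A \<Longrightarrow> finite F \<Longrightarrow> \<exists>q\<in>B-F. good p q"
    and H2: "\<And>q F. q \<in> B \<Longrightarrow> finite F \<Longrightarrow> \<exists>p\<in>A-F. good p q"
  shows "\<exists>f. bij_betw f A B \<and> (\<forall>p\<in>A. good p (f p))"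
proof -
  define a where "a = from_nat_into A"
  define b where "b = from_nat_into B"
  have aA: "a n \<in> A" for n using nA by (simp add: a_def from_nat_into)
  have bB: "b n \<in> B" for n using nB by (simp add: b_def from_nat_into)
  have ra: "range a = A" using cA nA by (simp add: a_def range_from_nat_into)
  have rb: "range b = B" using cB nB by (simp add: b_def range_from_nat_into)
  define nxt where "nxt R n = (SOME R'. pbij_ok good A B R' \<and> R \<subseteq> R' \<and> a n \<in> Domain R' \<and> b n \<in> Range R')" for R n
  have nxt: "pbij_ok good A B (nxt R n) \<and> R \<subseteq> nxt R n \<and> a n \<in> Domain (nxt R n) \<and> b n \<in> Range (nxt R n)"
    if "pbij_ok good A B R" for R n
    unfolding nxt_def by (rule someI_ex, rule pbij_ext_both[OF that aA bB H1 H2])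
  define Rs where "Rs = rec_nat {} (\<lambda>n R. nxt R n)"
  have Rs0: "Rs 0 = {}" and RsS: "Rs (Suc n) = nxt (Rs n) n" for n by (simp_all add: Rs_def)
  have okn: "pbij_ok good A B (Rs n)" for n
  proof (induction n)
    case 0 then show ?case by (simp add: Rs0 pbij_ok_def)
  next
    case (Suc n) then show ?case using nxt by (simp add: RsS)
  qed
  have incs: "Rs n \<subseteq> Rs (Suc n)" for n using nxt[OF okn] by (simp add: RsS)
  have mono: "m \<le> n \<Longrightarrow> Rs m \<subseteq> Rs n" for m n
    by (rule lift_Suc_mono_le[of Rs, OF incs])
  have dom: "a n \<in> Domain (Rs (Suc n))" and ran: "b n \<in> Range (Rs (Suc n))" for n
    using nxt[OF okn] by (simp_all add: RsS)
  define U where "U = (\<Union>n. Rs n)"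
  have UAB: "U \<subseteq> A \<times> B" using okn unfolding U_def pbij_ok_def by blast
  have Ugood: "\<And>p q. (p,q) \<in> U \<Longrightarrow> good p q" using okn unfolding U_def pbij_ok_def by blast
  have Ufun: "(p = p') = (q = q')" if PQ: "(p,q) \<in> U" "(p',q') \<in> U" for p q p' q'
  proof -
    obtain m n where "(p,q) \<in> Rs m" "(p',q') \<in> Rs n" using PQ unfolding U_def by blast
    then have "(p,q) \<in> Rs (max m n)" "(p',q') \<in> Rs (max m n)" using mono[of m "max m n"] mono[of n "max m n"] by auto
    then show ?thesis using okn[of "max m n"] unfolding pbij_ok_def by blast
  qed
  have UD: "Domain U = A"
  proof
    show "Domain U \<subseteq> A" using UAB by auto
    show "A \<subseteq> Domain U"
    proof
      fix p assume "p \<in> A"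
      then obtain n where "p = a n" using ra by blast
      then show "p \<in> Domain U" using dom[of n] unfolding U_def by blast
    qed
  qed
  have UR: "Range U = B"
  proof
    show "Range U \<subseteq> B" using UAB by auto
    show "B \<subseteq> Range U"
    proof
      fix q assume "q \<in> B"
      then obtain n where "q = b n" using rb by blast
      then show "q \<in> Range U" using ran[of n] unfolding U_def by blast
    qed
  qed
  define f where "f p = (SOME q. (p,q) \<in> U)" for p
  have fU: "(p, f p) \<in> U" if "p \<in> A" for p
    unfolding f_def using UD that by (metis Domain_iff someI_ex)
  have "bij_betw f A B"
    unfolding bij_betw_def
  proof
    show "inj_on f A" unfolding inj_on_def using fU Ufun by metis
    show "f ` A = B"
    proof
      show "f ` A \<subseteq> B" using fU UAB by blast
      show "B \<subseteq> f ` A"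
      proof
        fix q assume "q \<in> B"
        then obtain p where pq: "(p,q) \<in> U" using UR by blast
        then have "p \<in> A" using UAB by blast
        then have "f p = q" using Ufun[OF fU[OF \<open>p\<in>A\<close>] pq] by simp
        then show "q \<in> f ` A" using \<open>p \<in> A\<close> by blast
      qed
    qed
  qed
  then show ?thesis using fU Ugood by blast
qed


lemma min_pos_finite:
  assumes "finite F" "\<And>q. q \<in> F \<Longrightarrow> 0 < g q" "(0::real) < \<delta>0"
  shows "\<exists>\<delta>>0. \<delta> \<le> \<delta>0 \<and> (\<forall>q\<in>F. \<delta> \<le> g q)"
proof (intro exI conjI ballI)
  show "0 < Min (insert \<delta>0 (g ` F))" using assms by (simp add: Min_gr_iff)
  show "Min (insert \<delta>0 (g ` F)) \<le> \<delta>0" using assms by simp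
  fix q assume "q \<in> F" then show "Min (insert \<delta>0 (g ` F)) \<le> g q" using assms by simp
qed

locale pext = K: Metric_space M d + XM: Metric_space MX dX
  for M :: "'b set" and d and MX :: "'a set" and dX +
  fixes P :: "'b set" and e :: "'a \<Rightarrow> 'b"
  assumes pe: "peripheral_extension XM.mtopology K.mtopology P e"
    and cX: "compact_space XM.mtopology" and neX: "MX \<noteq> {}"
begin

lemma PM: "P \<subseteq> M" using pe unfolding peripheral_extension_def by simp
lemma openP: "openin K.mtopology P" using pe unfolding peripheral_extension_def by simp
lemma clos: "K.mtopology closure_of P = M" using pe unfolding peripheral_extension_def by simp
lemma compK: "compact_space K.mtopology" using pe unfolding peripheral_extension_def by simp
lemma cntP: "countable P" and infP: "infinite P" using pe unfolding peripheral_extension_def by simp_all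
lemma hom: "homeomorphic_map XM.mtopology (subtopology K.mtopology (M - P)) e"
  using pe unfolding peripheral_extension_def by simp

lemma single_open: assumes "p \<in> P" shows "openin K.mtopology {p}"
proof -
  have "subtopology K.mtopology P = discrete_topology P" using pe unfolding peripheral_extension_def by simp
  then have "openin (subtopology K.mtopology P) {p}" using assms by simp
  then show ?thesis using openin_trans_full openP by blast
qed

lemma eimg: "e ` MX = M - P"
  using homeomorphic_imp_surjective_map[OF hom] by auto
lemma einj: "inj_on e MX"
  using homeomorphic_imp_injective_map[OF hom] by simp
lemma eM: "x \<in> MX \<Longrightarrow> e x \<in> M" and eP: "x \<in> MX \<Longrightarrow> e x \<notin> P"
  using eimg by auto
lemma econt: "continuous_map XM.mtopology K.mtopology e"
  using homeomorphic_imp_continuous_map[OF hom] continuous_map_in_subtopology by blast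

lemma e_cont: assumes "x \<in> MX" "\<epsilon> > 0"
  shows "\<exists>\<delta>>0. \<forall>x'\<in>MX. dX x' x < \<delta> \<longrightarrow> d (e x') (e x) < \<epsilon>"
proof -
  from econt have "\<forall>a\<in>MX. \<forall>\<epsilon>>0. \<exists>\<delta>>0. \<forall>x. x \<in> MX \<and> dX a x < \<delta> \<longrightarrow> d (e a) (e x) < \<epsilon>"
    using XM.metric_continuous_map[OF K.Metric_space_axioms] by simp
  then obtain \<delta> where "\<delta> > 0" "\<forall>x'. x' \<in> MX \<and> dX x x' < \<delta> \<longrightarrow> d (e x) (e x') < \<epsilon>"
    using assms by blast
  then show ?thesis by (metis XM.commute K.commute)
qed

lemma e_inv: assumes "x \<in> MX" "\<epsilon> > 0"
  shows "\<exists>\<delta>>0. \<forall>x'\<in>MX. d (e x') (e x) < \<delta> \<longrightarrow> dX x' x < \<epsilon>"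
proof -
  have "openin XM.mtopology (XM.mball x \<epsilon>)" by simp
  then have "openin (subtopology K.mtopology (M - P)) (e ` XM.mball x \<epsilon>)"
    using homeomorphic_imp_open_map[OF hom] unfolding open_map_def by blast
  then obtain T where T: "openin K.mtopology T" "e ` XM.mball x \<epsilon> = T \<inter> (M - P)"
    by (auto simp: openin_subtopology)
  have "e x \<in> T" using T assms by auto
  then obtain r where r: "r > 0" "K.mball (e x) r \<subseteq> T"
    using T(1) K.openin_mtopology by blast
  show ?thesis
  proof (intro exI conjI ballI impI)
    show "r > 0" by fact
    fix x' assume x': "x' \<in> MX" "d (e x') (e x) < r"
    then have "e x' \<in> T \<inter> (M - P)" using r eM eP assms by (auto simp: K.commute)
    then obtain z where z: "z \<in> XM.mball x \<epsilon>" "e x' = e z" using T by (metis imageE)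
    then have "z = x'" using einj x' unfolding inj_on_def by auto
    then show "dX x' x < \<epsilon>" using z by (simp add: XM.commute)
  qed
qed

definition rho where "rho y = (SOME x. x \<in> MX \<and> (\<forall>x'\<in>MX. d y (e x) \<le> d y (e x')))"
definition w where "w y = d y (e (rho y))"

lemma rho_ex: assumes y: "y \<in> M" shows "\<exists>x. x \<in> MX \<and> (\<forall>x'\<in>MX. d y (e x) \<le> d y (e x'))"
proof -
  define g where "g x = d y (e x)" for x
  have "continuous_map XM.mtopology Met_TC.mtopology g"
    unfolding XM.metric_continuous_map[OF Met_TC.Metric_space_axioms]
  proof (intro conjI ballI allI impI)
    show "g ` MX \<subseteq> UNIV" by simp
    fix a and \<epsilon>::real assume a: "a \<in> MX" and "\<epsilon> > 0"
    then obtain \<delta> where \<delta>: "\<delta> > 0" "\<forall>x'\<in>MX. dX x' a < \<delta> \<longrightarrow> d (e x') (e a) < \<epsilon>"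
      using e_cont by blast
    show "\<exists>\<delta>>0. \<forall>x. x \<in> MX \<and> dX a x < \<delta> \<longrightarrow> dist (g a) (g x) < \<epsilon>"
    proof (intro exI conjI allI impI)
      show "\<delta> > 0" by fact
      fix x assume x: "x \<in> MX \<and> dX a x < \<delta>"
      then have "d (e x) (e a) < \<epsilon>" using \<delta> by (simp add: XM.commute)
      moreover have "\<bar>d y (e a) - d (e a) (e x)\<bar> \<le> d y (e x)"
        using K.mdist_reverse_triangle[of y "e a" "e x"] y eM a x by simp
      moreover have "d y (e a) \<le> d y (e x) + d (e x) (e a)"
        using K.triangle[of y "e x" "e a"] y eM a x by simp
      moreover have "d y (e x) \<le> d y (e a) + d (e a) (e x)"
        using K.triangle[of y "e a" "e x"] y eM a x by simp
      ultimately show "dist (g a) (g x) < \<epsilon>"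
        by (simp add: g_def dist_real_def K.commute[of "e a" "e x"] abs_less_iff)
    qed
  qed
  then have "continuous_map XM.mtopology euclideanreal g" by simp
  then have "compactin euclideanreal (g ` MX)"
    using image_compactin cX unfolding compact_space_def by fastforce
  then have "compact (g ` MX)" by simp
  then obtain s where "s \<in> g ` MX" "\<forall>t\<in>g ` MX. s \<le> t"
    using compact_attains_inf neX by blast
  then show ?thesis unfolding g_def by blast
qed

lemma rho: assumes "y \<in> M" shows "rho y \<in> MX" "\<And>x'. x' \<in> MX \<Longrightarrow> w y \<le> d y (e x')"
  using someI_ex[OF rho_ex[OF assms]] unfolding rho_def[symmetric] w_def by auto

lemma rho_e: assumes "x \<in> MX" shows "rho (e x) = x" "w (e x) = 0"
proof -
  have "w (e x) \<le> d (e x) (e x)" using rho(2)[OF eM[OF assms] assms] .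
  then have "w (e x) = 0" using assms eM by (simp add: w_def antisym)
  then show "w (e x) = 0" .
  then have "e (rho (e x)) = e x" using rho(1)[OF eM[OF assms]] eM assms
    unfolding w_def by (metis K.zero)
  then show "rho (e x) = x" using einj assms rho(1)[OF eM[OF assms]] unfolding inj_on_def by blast
qed

lemma w_nonneg: "0 \<le> w y" by (simp add: w_def)

lemma w_pos: assumes "p \<in> P" shows "0 < w p"
proof -
  have "rho p \<in> MX" using rho(1) PM assms by blast
  then have "e (rho p) \<noteq> p" using eP assms by metis
  then show ?thesis unfolding w_def using \<open>rho p \<in> MX\<close> eM PM assms by auto
qed

lemma rho_notP: assumes "y \<in> M" "y \<notin> P" shows "e (rho y) = y"
proof -
  obtain x where "x \<in> MX" "y = e x" using eimg assms by blast
  then show ?thesis using rho_e by simp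
qed

end

context pext begin

lemma prop_d: assumes x: "x \<in> MX" "\<epsilon> > 0"
  shows "\<exists>\<delta>>0. \<forall>y\<in>M. d y (e x) < \<delta> \<longrightarrow> dX (rho y) x < \<epsilon>"
proof -
  obtain \<delta>0 where \<delta>0: "\<delta>0 > 0" "\<forall>x'\<in>MX. d (e x') (e x) < \<delta>0 \<longrightarrow> dX x' x < \<epsilon>"
    using e_inv[OF x] by blast
  show ?thesis
  proof (intro exI conjI ballI impI)
    show "\<delta>0/2 > 0" using \<delta>0 by simp
    fix y assume y: "y \<in> M" "d y (e x) < \<delta>0/2"
    have "w y \<le> d y (e x)" using rho(2)[OF y(1) x(1)] .
    moreover have "d (e (rho y)) (e x) \<le> d (e (rho y)) y + d y (e x)"
      using K.triangle[of "e (rho y)" y "e x"] y rho(1)[OF y(1)] eM x by simp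
    moreover have "d (e (rho y)) y = w y" by (simp add: w_def K.commute)
    ultimately have "d (e (rho y)) (e x) < \<delta>0" using y by linarith
    then show "dX (rho y) x < \<epsilon>" using \<delta>0 rho(1)[OF y(1)] by blast
  qed
qed

lemma prop_e: assumes x: "x \<in> MX" "\<epsilon> > 0"
  shows "\<exists>\<eta>>0. \<forall>y\<in>M. dX (rho y) x < \<eta> \<and> w y < \<eta> \<longrightarrow> d y (e x) < \<epsilon>"
proof -
  obtain \<delta>0 where \<delta>0: "\<delta>0 > 0" "\<forall>x'\<in>MX. dX x' x < \<delta>0 \<longrightarrow> d (e x') (e x) < \<epsilon>/2"
    using e_cont[OF x(1)] x(2) by (meson half_gt_zero)
  show ?thesis
  proof (intro exI conjI ballI impI)
    show "min \<delta>0 (\<epsilon>/2) > 0" using \<delta>0 x by simp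
    fix y assume y: "y \<in> M" "dX (rho y) x < min \<delta>0 (\<epsilon>/2) \<and> w y < min \<delta>0 (\<epsilon>/2)"
    have "d y (e x) \<le> d y (e (rho y)) + d (e (rho y)) (e x)"
      using K.triangle[of y "e (rho y)" "e x"] y rho(1)[OF y(1)] eM x by simp
    moreover have "d (e (rho y)) (e x) < \<epsilon>/2" using \<delta>0 y rho(1)[OF y(1)] by auto
    ultimately show "d y (e x) < \<epsilon>" using y unfolding w_def by linarith
  qed
qed

lemma prop_b: assumes "\<epsilon> > 0" shows "finite {p\<in>P. \<epsilon> \<le> w p}"
proof (rule ccontr)
  define S where "S = {p\<in>P. \<epsilon> \<le> w p}"
  assume "\<not> finite {p\<in>P. \<epsilon> \<le> w p}"
  then have "infinite S" "S \<subseteq> M" using PM by (auto simp: S_def)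
  then obtain z where z: "z \<in> K.mtopology derived_set_of S"
    using compK K.compact_space_eq_Bolzano_Weierstrass by blast
  then have zM: "z \<in> M" by (simp add: in_derived_set_of)
  show False
  proof (cases "z \<in> P")
    case True
    then show False using z single_open[OF True] by (auto simp: in_derived_set_of)
  next
    case False
    then obtain x where x: "x \<in> MX" "z = e x" using eimg zM by blast
    have "openin K.mtopology (K.mball z \<epsilon>)" by simp
    then obtain y where y: "y \<in> S" "y \<in> K.mball z \<epsilon>"
      using z zM assms by (auto simp: in_derived_set_of)
    have "w y \<le> d y (e x)" using rho(2)[of y x] y x by auto
    also have "\<dots> < \<epsilon>" using y x by (simp add: K.commute)
    finally show False using y by (simp add: S_def)
  qed
qed

lemma prop_c: assumes x: "x \<in> MX" "\<eta> > 0" and F: "finite F"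
  shows "\<exists>q\<in>P-F. dX (rho q) x < \<eta>"
proof -
  obtain \<delta>0 where \<delta>0: "\<delta>0 > 0" "\<forall>y\<in>M. d y (e x) < \<delta>0 \<longrightarrow> dX (rho y) x < \<eta>"
    using prop_d[OF x(1,2)] by blast
  have "\<And>q. q \<in> F \<inter> P \<Longrightarrow> 0 < d q (e x)"
  proof -
    fix q assume "q \<in> F \<inter> P"
    then have "q \<in> M" "q \<noteq> e x" using PM eP x by auto
    then show "0 < d q (e x)" using eM x by simp
  qed
  then obtain \<delta> where \<delta>: "\<delta> > 0" "\<delta> \<le> \<delta>0" "\<forall>q\<in>F \<inter> P. \<delta> \<le> d q (e x)"
    using min_pos_finite[of "F \<inter> P" "\<lambda>q. d q (e x)" \<delta>0] F \<delta>0 by auto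
  have "e x \<in> K.mtopology closure_of P" using clos eM x by simp
  moreover have "openin K.mtopology (K.mball (e x) \<delta>)" "e x \<in> K.mball (e x) \<delta>"
    using \<delta> eM x by auto
  ultimately obtain q where q: "q \<in> P" "q \<in> K.mball (e x) \<delta>"
    unfolding in_closure_of by blast
  then have dq: "d q (e x) < \<delta>" by (simp add: K.commute)
  then have "q \<notin> F" using \<delta> q by force
  moreover have "dX (rho q) x < \<eta>" using \<delta>0 dq \<delta> q PM by force
  ultimately show ?thesis using q by blast
qed

end


lemma pext_uniq:
  assumes E1: "pext M1 d1 MX dX P1 e1" and E2: "pext M2 d2 MX dX P2 e2"
  shows "\<exists>h. homeomorphic_map (Metric_space.mtopology M1 d1) (Metric_space.mtopology M2 d2) h
            \<and> (\<forall>x\<in>MX. h (e1 x) = e2 x)"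
proof -
  interpret A: pext M1 d1 MX dX P1 e1 by (rule E1)
  interpret B: pext M2 d2 MX dX P2 e2 by (rule E2)
  define good where "good p q \<longleftrightarrow> dX (B.rho q) (A.rho p) < max (A.w p) (B.w q)" for p q
  have H1: "\<exists>q\<in>P2-F. good p q" if PF: "p \<in> P1" "finite F" for p F
  proof -
    have "A.rho p \<in> MX" using A.rho(1) A.PM PF by blast
    then obtain q where "q \<in> P2-F" "dX (B.rho q) (A.rho p) < A.w p"
      using B.prop_c[of "A.rho p" "A.w p" F] A.w_pos PF by blast
    then show ?thesis unfolding good_def by force
  qed
  have H2: "\<exists>p\<in>P1-F. good p q" if PF: "q \<in> P2" "finite F" for q F
  proof -
    have "B.rho q \<in> MX" using B.rho(1) B.PM PF by blast
    then obtain p where "p \<in> P1-F" "dX (A.rho p) (B.rho q) < B.w q"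
      using A.prop_c[of "B.rho q" "B.w q" F] B.w_pos PF by blast
    then show ?thesis unfolding good_def by (force simp: A.XM.commute)
  qed
  have neP1: "P1 \<noteq> {}" using A.infP by auto
  have neP2: "P2 \<noteq> {}" using B.infP by auto
  obtain f where f: "bij_betw f P1 P2" "\<forall>p\<in>P1. good p (f p)"
    using back_forth[OF A.cntP B.cntP neP1 neP2 H1 H2] by blast
  have fP2: "p \<in> P1 \<Longrightarrow> f p \<in> P2" for p using f(1) bij_betwE by blast
  define h where "h y = (if y \<in> P1 then f y else e2 (A.rho y))" for y
  have he: "h (e1 x) = e2 x" if "x \<in> MX" for x
    using that A.eP A.rho_e by (simp add: h_def)
  have hM: "h ` M1 = M2"
  proof
    show "h ` M1 \<subseteq> M2"
    proof
      fix z assume "z \<in> h ` M1"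
      then obtain y where y: "y \<in> M1" "z = h y" by blast
      show "z \<in> M2"
      proof (cases "y \<in> P1")
        case True then show ?thesis using y fP2 B.PM by (auto simp: h_def)
      next
        case False then show ?thesis using y A.rho(1) B.eM by (auto simp: h_def)
      qed
    qed
    show "M2 \<subseteq> h ` M1"
    proof
      fix z assume z: "z \<in> M2"
      show "z \<in> h ` M1"
      proof (cases "z \<in> P2")
        case True
        then obtain p where "p \<in> P1" "z = f p" using f(1) by (metis bij_betw_def imageE)
        then show ?thesis using A.PM by (force simp: h_def)
      next
        case False
        then obtain x where x: "x \<in> MX" "z = e2 x" using B.eimg z by blast
        then show ?thesis using he A.eM by force
      qed
    qed
  qed
  have hinj: "inj_on h M1"
  proof (rule inj_onI)
    fix y y' assume y: "y \<in> M1" "y' \<in> M1" "h y = h y'"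
    show "y = y'"
    proof (cases "y \<in> P1"; cases "y' \<in> P1")
      assume "y \<in> P1" "y' \<in> P1" then show ?thesis using y f(1) by (auto simp: h_def bij_betw_def inj_on_def)
    next
      assume "y \<in> P1" "y' \<notin> P1"
      then show ?thesis using y fP2[of y] B.eP[of "A.rho y'"] A.rho(1)[of y'] by (auto simp: h_def)
    next
      assume "y \<notin> P1" "y' \<in> P1"
      then show ?thesis using y fP2[of y'] B.eP[of "A.rho y"] A.rho(1)[of y] by (auto simp: h_def)
    next
      assume "y \<notin> P1" "y' \<notin> P1"
      then have "e2 (A.rho y) = e2 (A.rho y')" using y by (simp add: h_def)
      then have "A.rho y = A.rho y'" using B.einj A.rho(1) y unfolding inj_on_def by blast
      then show ?thesis using A.rho_notP y \<open>y \<notin> P1\<close> \<open>y' \<notin> P1\<close> by metis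
    qed
  qed
  have hcont: "continuous_map A.K.mtopology B.K.mtopology h"
    unfolding A.K.metric_continuous_map[OF B.K.Metric_space_axioms]
  proof (intro conjI ballI allI impI)
    show "h ` M1 \<subseteq> M2" using hM by simp
    fix a and \<epsilon>::real assume a: "a \<in> M1" and \<epsilon>: "\<epsilon> > 0"
    show "\<exists>\<delta>>0. \<forall>x. x \<in> M1 \<and> d1 a x < \<delta> \<longrightarrow> d2 (h a) (h x) < \<epsilon>"
    proof (cases "a \<in> P1")
      case True
      obtain r where r: "r > 0" "A.K.mball a r \<subseteq> {a}"
        using A.single_open[OF True] A.K.openin_mtopology by blast
      show ?thesis
      proof (intro exI conjI allI impI)
        show "r > 0" by fact
        fix x assume "x \<in> M1 \<and> d1 a x < r"
        then have "x = a" using r a by auto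
        then show "d2 (h a) (h x) < \<epsilon>" using \<epsilon> hM a by auto
      qed
    next
      case False
      then obtain x0 where x0: "x0 \<in> MX" "a = e1 x0" using A.eimg a by blast
      obtain \<eta> where \<eta>: "\<eta> > 0" "\<forall>y\<in>M2. dX (B.rho y) x0 < \<eta> \<and> B.w y < \<eta> \<longrightarrow> d2 y (e2 x0) < \<epsilon>"
        using B.prop_e[OF x0(1) \<epsilon>] by blast
      obtain \<delta>0 where \<delta>0: "\<delta>0 > 0" "\<forall>y\<in>M1. d1 y (e1 x0) < \<delta>0 \<longrightarrow> dX (A.rho y) x0 < \<eta>/2"
        using A.prop_d[OF x0(1)] \<eta> by (meson half_gt_zero)
      define F where "F = {p\<in>P1. \<eta>/2 \<le> A.w p} \<union> {p\<in>P1. \<eta>/2 \<le> B.w (f p)}"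
      have fin1: "finite {p\<in>P1. \<eta>/2 \<le> A.w p}" using A.prop_b[of "\<eta>/2"] \<eta> by simp
      have "f ` {p\<in>P1. \<eta>/2 \<le> B.w (f p)} \<subseteq> {q\<in>P2. \<eta>/2 \<le> B.w q}" using fP2 by auto
      then have "finite (f ` {p\<in>P1. \<eta>/2 \<le> B.w (f p)})"
        using B.prop_b[of "\<eta>/2"] \<eta> finite_subset by auto
      moreover have "inj_on f {p\<in>P1. \<eta>/2 \<le> B.w (f p)}"
        using f(1) unfolding bij_betw_def by (auto intro: inj_on_subset)
      ultimately have fin2: "finite {p\<in>P1. \<eta>/2 \<le> B.w (f p)}" using finite_image_iff by blast
      have finF: "finite F" using fin1 fin2 by (simp add: F_def)
      have Fpos: "\<And>q. q \<in> F \<Longrightarrow> 0 < d1 q a"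
      proof -
        fix q assume "q \<in> F"
        then have "q \<in> P1" by (auto simp: F_def)
        then have "q \<in> M1" "q \<noteq> a" using A.PM False by auto
        then show "0 < d1 q a" using a by simp
      qed
      obtain \<delta> where \<delta>: "\<delta> > 0" "\<delta> \<le> \<delta>0" "\<forall>q\<in>F. \<delta> \<le> d1 q a"
        using min_pos_finite[of F "\<lambda>q. d1 q a" \<delta>0] finF Fpos \<delta>0(1) by blast
      show ?thesis
      proof (intro exI conjI allI impI)
        show "\<delta> > 0" by fact
        fix y assume y: "y \<in> M1 \<and> d1 a y < \<delta>"
        have ha: "h a = e2 x0" using he x0 by simp
        have dy: "d1 y (e1 x0) < \<delta>0" using y \<delta> x0 by (simp add: A.K.commute)
        then have r1: "dX (A.rho y) x0 < \<eta>/2" using \<delta>0 y by blast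
        have "d2 (h y) (e2 x0) < \<epsilon>"
        proof (cases "y \<in> P1")
          case True
          have "y \<notin> F" using \<delta> y by (force simp: A.K.commute)
          then have w1: "A.w y < \<eta>/2" and w2: "B.w (f y) < \<eta>/2" using True by (auto simp: F_def)
          have "dX (B.rho (f y)) (A.rho y) < \<eta>/2" using f(2) True w1 w2 by (auto simp: good_def)
          moreover have "dX (B.rho (f y)) x0 \<le> dX (B.rho (f y)) (A.rho y) + dX (A.rho y) x0"
            using A.XM.triangle B.rho(1) A.rho(1) fP2 True B.PM y x0 by blast
          ultimately have "dX (B.rho (f y)) x0 < \<eta>" using r1 by linarith
          moreover have "f y \<in> M2" using True fP2 B.PM by blast
          moreover have "B.w (f y) < \<eta>" using w2 \<eta> by linarith
          ultimately show ?thesis using \<eta>(2) True by (simp add: h_def)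
        next
          case False
          have hy: "h y = e2 (A.rho y)" using False by (simp add: h_def)
          have "A.rho y \<in> MX" using A.rho(1) y by blast
          then have "B.rho (h y) = A.rho y" "B.w (h y) = 0" using hy B.rho_e by auto
          then show ?thesis using \<eta> r1 hy B.eM \<open>A.rho y \<in> MX\<close> by auto
        qed
        then show "d2 (h a) (h y) < \<epsilon>" using ha by (simp add: B.K.commute)
      qed
    qed
  qed
  have "homeomorphic_map A.K.mtopology B.K.mtopology h"
    using continuous_imp_homeomorphic_map[OF hcont A.compK B.K.Hausdorff_space_mtopology] hM hinj
    by simp
  then show ?thesis using he by blast
qed


lemma pe_single_open:
  assumes pe: "peripheral_extension X K P e" and p: "p \<in> P"
  shows "openin K {p}"
proof -
  have "subtopology K P = discrete_topology P" "openin K P"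
    using pe unfolding peripheral_extension_def by simp_all
  then have "openin (subtopology K P) {p}" using p by simp
  then show ?thesis using openin_trans_full \<open>openin K P\<close> by blast
qed

lemma pe_swap:
  assumes pe: "peripheral_extension X K P e" and p: "p \<in> P" and q: "q \<in> P"
  shows "\<exists>h. homeomorphic_map K K h \<and> (\<forall>x\<in>topspace X. h (e x) = e x) \<and> h p = q"
proof -
  define h where "h y = (if y = p then q else if y = q then p else y)" for y
  have PK: "P \<subseteq> topspace K" and met: "metrizable_space K"
    using pe unfolding peripheral_extension_def by simp_all
  have t1: "t1_space K" using Hausdorff_imp_t1_space[OF metrizable_imp_Hausdorff_space[OF met]] .
  have pq: "p \<in> topspace K" "q \<in> topspace K" using p q PK by auto
  have cl: "closedin K {p,q}"
    using t1_space_closedin_finite[THEN iffD1, OF t1, rule_format, of "{p,q}"] pq by simp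
  have op: "openin K {p}" "openin K {q}" using pe_single_open[OF pe p] pe_single_open[OF pe q] by simp_all
  have hh: "h (h y) = y" for y by (simp add: h_def)
  have cont: "continuous_map K K h"
    unfolding continuous_map_def
  proof (intro conjI allI impI)
    show "h \<in> topspace K \<rightarrow> topspace K" using pq by (auto simp: h_def)
    fix U assume U: "openin K U"
    have "{x \<in> topspace K. h x \<in> U} = (U - {p,q}) \<union> (if q \<in> U then {p} else {}) \<union> (if p \<in> U then {q} else {})"
      using openin_subset[OF U] pq by (auto simp: h_def)
    moreover have "openin K (U - {p,q})" using U cl by (rule openin_diff)
    moreover have "openin K ((U - {p,q}) \<union> (if q \<in> U then {p} else {}) \<union> (if p \<in> U then {q} else {}))"
      by (intro openin_Un) (simp_all add: op \<open>openin K (U - {p,q})\<close>)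
    ultimately show "openin K {x \<in> topspace K. h x \<in> U}" by (simp only:)
  qed
  have "homeomorphic_maps K K h h" unfolding homeomorphic_maps_def using cont hh by simp
  then have "homeomorphic_map K K h" using homeomorphic_map_maps by blast
  moreover have "h (e x) = e x" if "x \<in> topspace X" for x
  proof -
    have "homeomorphic_map X (subtopology K (topspace K - P)) e"
      using pe unfolding peripheral_extension_def by simp
    then have "e ` topspace X = topspace K \<inter> (topspace K - P)"
      using homeomorphic_imp_surjective_map by fastforce
    then have "e x \<notin> P" using that by blast
    then show ?thesis using p q by (auto simp: h_def)
  qed
  moreover have "h p = q" by (simp add: h_def)
  ultimately show ?thesis by blast
qed


lemma small_inv: assumes "(r::real) > 0" shows "\<exists>N. \<forall>n\<ge>N. 1 / (real n + 1) < r"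
proof -
  obtain N where N: "inverse (real (Suc N)) < r" using reals_Archimedean assms by blast
  show ?thesis
  proof (intro exI allI impI)
    fix n assume "N \<le> n"
    then have "1 / (real n + 1) \<le> inverse (real (Suc N))"
      by (simp add: divide_simps)
    then show "1 / (real n + 1) < r" using N by linarith
  qed
qed

lemma dense_seq:
  assumes XM: "Metric_space MX dX" and cX: "compact_space (Metric_space.mtopology MX dX)" and ne: "MX \<noteq> {}"
  shows "\<exists>s::nat\<Rightarrow>'a. (\<forall>n. s n \<in> MX) \<and> (\<forall>x\<in>MX. \<forall>\<epsilon>>0. \<forall>N. \<exists>n\<ge>N. dX x (s n) < \<epsilon>)"
proof -
  interpret XM: Metric_space MX dX by (rule XM)
  have tb: "XM.mtotally_bounded MX"
    using cX XM.compactin_imp_mtotally_bounded unfolding compact_space_def by simp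
  have "\<forall>k. \<exists>C. finite C \<and> C \<subseteq> MX \<and> MX \<subseteq> (\<Union>x\<in>C. XM.mball x (1 / (real k + 1)))"
    using tb unfolding XM.mtotally_bounded_def by (simp add: add_pos_nonneg)
  then obtain C where C: "\<And>k. finite (C k)" "\<And>k. C k \<subseteq> MX"
    "\<And>k. MX \<subseteq> (\<Union>x\<in>C k. XM.mball x (1 / (real k + 1)))" by metis
  have Cne: "C k \<noteq> {}" for k using C(3)[of k] ne by auto
  define s where "s n = from_nat_into (C (fst (prod_decode n))) (snd (prod_decode n))" for n
  have sM: "s n \<in> MX" for n using from_nat_into[OF Cne] C(2) unfolding s_def by blast
  have dd: "\<exists>n\<ge>N. dX x (s n) < \<epsilon>" if x: "x \<in> MX" and \<epsilon>: "\<epsilon> > 0" for x \<epsilon> N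
  proof -
    obtain N0 where N0: "\<forall>n\<ge>N0. 1 / (real n + 1) < \<epsilon>" using small_inv \<epsilon> by blast
    define k where "k = max N N0"
    obtain z where z: "z \<in> C k" "x \<in> XM.mball z (1 / (real k + 1))" using C(3)[of k] x by blast
    have "countable (C k)" using C(1) by (simp add: countable_finite)
    then obtain j where j: "from_nat_into (C k) j = z"
      using range_from_nat_into[OF Cne] z(1) by (metis imageE)
    define n where "n = prod_encode (k, j)"
    have "s n = z" using j by (simp add: s_def n_def)
    moreover have "n \<ge> N" using le_prod_encode_1[of k j] by (simp add: n_def k_def)
    moreover have "dX z x < \<epsilon>"
    proof -
      have "dX z x < 1 / (real k + 1)" using z(2) by simp
      moreover have "1 / (real k + 1) < \<epsilon>" using N0 k_def by simp
      ultimately show ?thesis by linarith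
    qed
    ultimately show ?thesis by (metis XM.commute)
  qed
  show ?thesis
    apply (rule exI[of _ s])
    apply (intro conjI allI ballI impI)
     apply (rule sM)
    apply (erule dd)
    apply assumption
    done
qed


lemma construct_pe:
  fixes MX :: "'a set"
  assumes XM: "Metric_space MX dX" and cX: "compact_space (Metric_space.mtopology MX dX)" and ne: "MX \<noteq> {}"
  shows "\<exists>(K :: ('a + nat) topology) P e. peripheral_extension (Metric_space.mtopology MX dX) K P e"
proof -
  interpret XM: Metric_space MX dX by (rule XM)
  obtain s :: "nat \<Rightarrow> 'a" where sM0: "\<forall>n. s n \<in> MX" and sd0: "\<forall>x\<in>MX. \<forall>\<epsilon>>0. \<forall>N. \<exists>n\<ge>N. dX x (s n) < \<epsilon>"
    using dense_seq[OF XM cX ne] by blast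
  have sM: "s n \<in> MX" for n using sM0 by blast
  have sd: "\<exists>n\<ge>N. dX x (s n) < \<epsilon>" if "x \<in> MX" "\<epsilon> > 0" for x \<epsilon> N using sd0 that by blast
  define pr :: "'a + nat \<Rightarrow> 'a" where "pr u = case_sum id s u" for u
  define ht :: "'a + nat \<Rightarrow> real" where "ht u = case_sum (\<lambda>_. 0) (\<lambda>n. 1 / (real n + 1)) u" for u
  define M' :: "('a + nat) set" where "M' = Inl ` MX \<union> range Inr"
  define D where "D u v = (if u = v then 0 else dX (pr u) (pr v) + ht u + ht v)" for u v
  have prM: "u \<in> M' \<Longrightarrow> pr u \<in> MX" for u using sM by (auto simp: M'_def pr_def)
  have ht0: "0 \<le> ht u" for u by (cases u) (auto simp: ht_def)
  have D_ll: "D (Inl x) (Inl y) = dX x y" if "x \<in> MX" "y \<in> MX" for x y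
    using that by (simp add: D_def pr_def ht_def)
  have D_lr: "D (Inl x) (Inr n) = dX x (s n) + 1 / (real n + 1)" for x n
    by (simp add: D_def pr_def ht_def)
  have D_rl: "D (Inr n) (Inl x) = dX (s n) x + 1 / (real n + 1)" for x n
    by (simp add: D_def pr_def ht_def)
  have D_r: "1 / (real n + 1) \<le> D (Inr n) v" if "v \<in> M'" "v \<noteq> Inr n" for n v
    using that prM[of v] sM[of n] ht0[of v] by (simp add: D_def pr_def ht_def)
  have pos_inv: "0 < 1 / (real n + 1)" for n by simp
  have KM: "Metric_space M' D"
  proof
    fix u v show "0 \<le> D u v" using ht0[of u] ht0[of v] by (simp add: D_def)
    show "D u v = D v u" by (simp add: D_def XM.commute)
  next
    fix u v assume uv: "u \<in> M'" "v \<in> M'"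
    show "(D u v = 0) = (u = v)"
    proof
      assume D0: "D u v = 0"
      show "u = v"
      proof (rule ccontr)
        assume ne: "u \<noteq> v"
        show False
        proof (cases u; cases v)
          fix x y assume "u = Inl x" "v = Inl y"
          then show False using D0 ne uv by (auto simp: D_ll M'_def)
        next
          fix x n assume "u = Inl x" "v = Inr n"
          then show False using D0 XM.nonneg[of x "s n"] pos_inv[of n] by (simp add: D_lr)
        next
          fix n y assume "u = Inr n" "v = Inl y"
          then show False using D0 XM.nonneg[of "s n" y] pos_inv[of n] by (simp add: D_rl)
        next
          fix n m assume "u = Inr n" "v = Inr m"
          then show False using D0 D_r[of v n] uv ne by auto
        qed
      qed
    qed (simp add: D_def)
  next
    fix u v w assume uvw: "u \<in> M'" "v \<in> M'" "w \<in> M'"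
    show "D u w \<le> D u v + D v w"
    proof (cases "u = w \<or> u = v \<or> v = w")
      case True
      have "0 \<le> D u v" "0 \<le> D v w" using ht0 by (simp_all add: D_def)
      then show ?thesis using True by (auto simp: D_def)
    next
      case False
      have "dX (pr u) (pr w) \<le> dX (pr u) (pr v) + dX (pr v) (pr w)"
        using XM.triangle prM uvw by blast
      then show ?thesis using False ht0[of v] by (simp add: D_def)
    qed
  qed
  interpret KM: Metric_space M' D by (rule KM)
  define K where "K = KM.mtopology"
  define P :: "('a + nat) set" where "P = range Inr"
  have topK: "topspace K = M'" by (simp add: K_def)
  have PM: "P \<subseteq> M'" by (auto simp: P_def M'_def)
  have sing: "openin K {Inr n}" for n
    unfolding K_def KM.openin_mtopology
  proof (intro conjI allI impI)
    show "{Inr n} \<subseteq> M'" by (simp add: M'_def)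
    fix u :: "'a + nat" assume "u \<in> {Inr n}"
    then have u: "u = Inr n" by simp
    show "\<exists>r>0. KM.mball u r \<subseteq> {Inr n}"
    proof (intro exI conjI)
      show "1 / (real n + 1) > 0" by simp
      show "KM.mball u (1 / (real n + 1)) \<subseteq> {Inr n}"
        using D_r u by force
    qed
  qed
  have openP: "openin K P"
  proof -
    have "P = (\<Union>n. {Inr n})" by (auto simp: P_def)
    then show ?thesis using sing by auto
  qed
  have disc: "subtopology K P = discrete_topology P"
  proof -
    have "openin (subtopology K P) {x}" if xP: "x \<in> P" for x
    proof -
      obtain n where "x = Inr n" using xP P_def by blast
      then show ?thesis using sing[of n] xP openin_subtopology_Int[of K "{x}" P] by auto
    qed
    moreover have "topspace (subtopology K P) = P" using PM topK by auto
    ultimately show ?thesis by (metis discrete_topology_unique)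
  qed
  have Inl_cont: "continuous_map XM.mtopology K Inl"
    unfolding K_def XM.metric_continuous_map[OF KM]
  proof (intro conjI ballI allI impI)
    show "Inl ` MX \<subseteq> M'" by (auto simp: M'_def)
    fix a and \<epsilon>::real assume "a \<in> MX" "\<epsilon> > 0"
    then show "\<exists>\<delta>>0. \<forall>x. x \<in> MX \<and> dX a x < \<delta> \<longrightarrow> D (Inl a) (Inl x) < \<epsilon>"
      using D_ll by auto
  qed
  have Acomp: "compactin K (Inl ` MX)"
    using image_compactin[OF _ Inl_cont] cX unfolding compact_space_def by simp
  have compK: "compact_space K"
    unfolding compact_space_def compactin_def
  proof (intro conjI allI impI)
    show "topspace K \<subseteq> topspace K" by simp
    fix \<U> assume U: "(\<forall>U\<in>\<U>. openin K U) \<and> topspace K \<subseteq> \<Union>\<U>"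
    then obtain \<V> where V: "finite \<V>" "\<V> \<subseteq> \<U>" "Inl ` MX \<subseteq> \<Union>\<V>"
      using Acomp topK unfolding compactin_def by (metis (no_types, lifting) M'_def Un_upper1 order_trans)
    have "\<And>V. V \<in> \<V> \<Longrightarrow> openin KM.mtopology V" using U V K_def by blast
    then obtain \<epsilon> where \<epsilon>: "\<epsilon> > 0" "\<forall>z\<in>Inl ` MX. \<exists>V\<in>\<V>. KM.mball z \<epsilon> \<subseteq> V"
      using KM.lebesgue_number[of "Inl ` MX" \<V>] Acomp V(3) K_def by blast
    obtain N where N: "\<forall>n\<ge>N. 1 / (real n + 1) < \<epsilon>" using small_inv \<epsilon>(1) by blast
    define G where "G n = (SOME U. U \<in> \<U> \<and> Inr n \<in> U)" for n
    have G: "G n \<in> \<U> \<and> Inr n \<in> G n" for n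
    proof -
      have "Inr n \<in> topspace K" by (simp add: topK M'_def)
      then have "\<exists>U. U \<in> \<U> \<and> Inr n \<in> U" using U by blast
      then show ?thesis unfolding G_def by (rule someI_ex)
    qed
    show "\<exists>\<F>. finite \<F> \<and> \<F> \<subseteq> \<U> \<and> topspace K \<subseteq> \<Union>\<F>"
    proof (intro exI conjI)
      show "finite (\<V> \<union> G ` {..<N})" using V by simp
      show "\<V> \<union> G ` {..<N} \<subseteq> \<U>" using V G by blast
      show "topspace K \<subseteq> \<Union>(\<V> \<union> G ` {..<N})"
      proof
        fix u assume "u \<in> topspace K"
        then consider x where "x \<in> MX" "u = Inl x" | n where "u = Inr n" by (auto simp: topK M'_def)
        then show "u \<in> \<Union>(\<V> \<union> G ` {..<N})"
        proof cases
          case 1 then show ?thesis using V by blast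
        next
          case (2 n)
          show ?thesis
          proof (cases "n < N")
            case True then show ?thesis using G 2 by blast
          next
            case False
            then have "1 / (real n + 1) < \<epsilon>" using N by simp
            then have "D (Inl (s n)) (Inr n) < \<epsilon>" using sM[of n] by (simp add: D_lr)
            moreover have "Inl (s n) \<in> M'" "Inr n \<in> M'" using sM[of n] by (auto simp: M'_def)
            ultimately have "u \<in> KM.mball (Inl (s n)) \<epsilon>"
              using 2 by (simp only: KM.in_mball)
            moreover obtain V where "V \<in> \<V>" "KM.mball (Inl (s n)) \<epsilon> \<subseteq> V" using \<epsilon>(2) sM by blast
            ultimately show ?thesis by blast
          qed
        qed
      qed
    qed
  qed
  have closP: "K closure_of P = topspace K"
  proof
    show "K closure_of P \<subseteq> topspace K" by (rule closure_of_subset_topspace)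
    show "topspace K \<subseteq> K closure_of P"
    proof
      fix u assume u: "u \<in> topspace K"
      show "u \<in> K closure_of P"
      proof (cases "u \<in> P")
        case True then show ?thesis using closure_of_subset PM topK by blast
      next
        case False
        then obtain x where x: "x \<in> MX" "u = Inl x" using u by (auto simp: topK M'_def P_def)
        show ?thesis unfolding in_closure_of
        proof (intro conjI allI impI)
          show "u \<in> topspace K" by fact
          fix T assume T: "u \<in> T \<and> openin K T"
          then obtain r where r: "r > 0" "KM.mball u r \<subseteq> T"
            unfolding K_def KM.openin_mtopology by blast
          obtain N where N: "\<forall>n\<ge>N. 1 / (real n + 1) < r/2" using small_inv r(1) by (meson half_gt_zero)
          obtain n where n: "n \<ge> N" "dX x (s n) < r/2" using sd[OF x(1), of "r/2" N] r by auto
          have "1 / (real n + 1) < r/2" using N n(1) by blast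
          then have "D u (Inr n) < r" using n(2) x by (simp add: D_lr)
          moreover have "u \<in> M'" "Inr n \<in> M'" using x by (auto simp: M'_def)
          ultimately have "Inr n \<in> KM.mball u r" by (simp only: KM.in_mball)
          then have "Inr n \<in> T" using r by blast
          then show "\<exists>y. y \<in> P \<and> y \<in> T" by (auto simp: P_def)
        qed
      qed
    qed
  qed
  have MP: "M' - P = Inl ` MX" by (auto simp: M'_def P_def)
  interpret SM: Submetric M' D "Inl ` MX" by (unfold_locales) (auto simp: M'_def)
  have subeq: "subtopology K (topspace K - P) = SM.sub.mtopology"
    using SM.mtopology_submetric MP topK K_def by simp
  have hom: "homeomorphic_map XM.mtopology (subtopology K (topspace K - P)) Inl"
    unfolding subeq homeomorphic_map_maps
  proof (intro exI)
    show "homeomorphic_maps XM.mtopology SM.sub.mtopology Inl projl"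
      unfolding homeomorphic_maps_def
    proof (intro conjI ballI)
      show "continuous_map XM.mtopology SM.sub.mtopology Inl"
        unfolding XM.metric_continuous_map[OF SM.sub.Metric_space_axioms]
        using D_ll by auto
      show "continuous_map SM.sub.mtopology XM.mtopology projl"
        unfolding SM.sub.metric_continuous_map[OF XM]
        using D_ll by fastforce
    qed auto
  qed
  have "peripheral_extension XM.mtopology K P Inl"
    unfolding peripheral_extension_def
    using KM.metrizable_space_mtopology compK PM topK openP disc closP hom
    by (auto simp: K_def P_def range_inj_infinite)
  then show ?thesis by blast
qed


theorem lemma1p1:
  fixes X :: "'a topology"
  assumes "metrizable_space X" and "compact_space X" and "topspace X \<noteq> {}"
  shows "(\<exists>(K :: ('a + nat) topology) P e. peripheral_extension X K P e)
    \<and> (\<forall>(K1 :: 'b topology) P1 e1 (K2 :: 'c topology) P2 e2.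
          peripheral_extension X K1 P1 e1 \<and> peripheral_extension X K2 P2 e2 \<longrightarrow>
          (\<exists>h. homeomorphic_map K1 K2 h \<and> (\<forall>x\<in>topspace X. h (e1 x) = e2 x)))
    \<and> (\<forall>(K :: 'b topology) P e. peripheral_extension X K P e \<longrightarrow>
          (\<forall>p\<in>P. \<forall>q\<in>P. \<exists>h. homeomorphic_map K K h \<and>
              (\<forall>x\<in>topspace X. h (e x) = e x) \<and> h p = q))"
proof -
  obtain MX dX where XM: "Metric_space MX dX" and Xeq: "X = Metric_space.mtopology MX dX"
    using assms(1) unfolding metrizable_space_def by blast
  have topX: "topspace X = MX" using Xeq Metric_space.topspace_mtopology[OF XM] by simp
  have cX: "compact_space (Metric_space.mtopology MX dX)" using assms(2) Xeq by simp
  have neX: "MX \<noteq> {}" using assms(3) topX by simp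
  have part1: "\<exists>(K :: ('a + nat) topology) P e. peripheral_extension X K P e"
    using construct_pe[OF XM cX neX] Xeq by simp
  have pext_of: "\<exists>M d. K = Metric_space.mtopology M d \<and> pext M d MX dX P e"
    if pe: "peripheral_extension X K P e" for K :: "'d topology" and P e
  proof -
    obtain M d where M: "Metric_space M d" and Keq: "K = Metric_space.mtopology M d"
      using pe unfolding peripheral_extension_def metrizable_space_def by blast
    have "pext M d MX dX P e"
      unfolding pext_def pext_axioms_def using M XM cX neX pe Keq Xeq by simp
    then show ?thesis using Keq by blast
  qed
  have part2: "\<forall>(K1 :: 'b topology) P1 e1 (K2 :: 'c topology) P2 e2.
          peripheral_extension X K1 P1 e1 \<and> peripheral_extension X K2 P2 e2 \<longrightarrow>
          (\<exists>h. homeomorphic_map K1 K2 h \<and> (\<forall>x\<in>topspace X. h (e1 x) = e2 x))"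
  proof (intro allI impI)
    fix K1 :: "'b topology" and P1 e1 and K2 :: "'c topology" and P2 e2
    assume "peripheral_extension X K1 P1 e1 \<and> peripheral_extension X K2 P2 e2"
    then obtain M1 d1 M2 d2 where
      1: "K1 = Metric_space.mtopology M1 d1" "pext M1 d1 MX dX P1 e1" and
      2: "K2 = Metric_space.mtopology M2 d2" "pext M2 d2 MX dX P2 e2"
      using pext_of by meson
    show "\<exists>h. homeomorphic_map K1 K2 h \<and> (\<forall>x\<in>topspace X. h (e1 x) = e2 x)"
      using pext_uniq[OF 1(2) 2(2)] 1(1) 2(1) topX by simp
  qed
  have part3: "\<forall>(K :: 'b topology) P e. peripheral_extension X K P e \<longrightarrow>
          (\<forall>p\<in>P. \<forall>q\<in>P. \<exists>h. homeomorphic_map K K h \<and>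
              (\<forall>x\<in>topspace X. h (e x) = e x) \<and> h p = q)"
  proof (intro allI impI ballI)
    fix K :: "'b topology" and P e p q
    assume pe: "peripheral_extension X K P e" and p: "p \<in> P" and q: "q \<in> P"
    show "\<exists>h. homeomorphic_map K K h \<and> (\<forall>x\<in>topspace X. h (e x) = e x) \<and> h p = q"
      by (rule pe_swap[OF pe p q])
  qed
  show ?thesis using part1 part2 part3 by blast
qed

end
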